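(* Let $0\to K_i\to L_i\to M_i\to 0$ be a family of admissible short exact sequences in an exact category $\mathsf K$. Assume that the products $\prod_iK_i$, $\prod_iL_i$, $\prod_iM_i$ exist in $\mathsf K$, and that there exists an admissible epimorphism $q\colon A\to\prod_iM_i$ where $A\in\mathsf K$ satisfies $\mathrm{Ext}^1_{\mathsf K}(A,K_i)=0$ for all $i$. Then $0\to\prod_iK_i\to\prod_iL_i\to\prod_iM_i\to0$ (with the induced morphisms) is an admissible short exact sequence in $\mathsf K$.
   Context: $\mathsf K$ is an exact category in Quillen's sense and $\mathrm{Ext}^1_{\mathsf K}$ denotes Yoneda Ext in $\mathsf K$. Products are not assumed to be exact. *)

theory Defs
  imports Main
begin

text \<open>Categories with untyped morphisms: a morphism f is an arrow A -> B when
  f is in Hom A B.  cmp g f is the composite "g after f".\<close>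

record ('o, 'm) acat =
  Ob  :: "'o set"
  Hom :: "'o \<Rightarrow> 'o \<Rightarrow> 'm set"
  cmp :: "'m \<Rightarrow> 'm \<Rightarrow> 'm"
  idm :: "'o \<Rightarrow> 'm"
  add :: "'m \<Rightarrow> 'm \<Rightarrow> 'm"
  zer :: "'o \<Rightarrow> 'o \<Rightarrow> 'm"

definition preadditive :: "('o, 'm, 'x) acat_scheme \<Rightarrow> bool" where
  "preadditive C \<longleftrightarrow>
     (\<forall>A B. Hom C A B \<noteq> {} \<longrightarrow> A \<in> Ob C \<and> B \<in> Ob C) \<and>
     (\<forall>A\<in>Ob C. idm C A \<in> Hom C A A) \<and>
     (\<forall>A B D f g. f \<in> Hom C A B \<and> g \<in> Hom C B D \<longrightarrow> cmp C g f \<in> Hom C A D) \<and>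
     (\<forall>A B f. f \<in> Hom C A B \<longrightarrow> cmp C (idm C B) f = f \<and> cmp C f (idm C A) = f) \<and>
     (\<forall>A B D E f g h. f \<in> Hom C A B \<and> g \<in> Hom C B D \<and> h \<in> Hom C D E \<longrightarrow>
        cmp C h (cmp C g f) = cmp C (cmp C h g) f) \<and>
     (\<forall>A\<in>Ob C. \<forall>B\<in>Ob C. zer C A B \<in> Hom C A B) \<and>
     (\<forall>A B f g. f \<in> Hom C A B \<and> g \<in> Hom C A B \<longrightarrow> add C f g \<in> Hom C A B) \<and>
     (\<forall>A B f g h. f \<in> Hom C A B \<and> g \<in> Hom C A B \<and> h \<in> Hom C A B \<longrightarrow>
        add C (add C f g) h = add C f (add C g h)) \<and>
     (\<forall>A B f g. f \<in> Hom C A B \<and> g \<in> Hom C A B \<longrightarrow> add C f g = add C g f) \<and>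
     (\<forall>A B f. f \<in> Hom C A B \<longrightarrow> add C f (zer C A B) = f) \<and>
     (\<forall>A B f. f \<in> Hom C A B \<longrightarrow> (\<exists>g\<in>Hom C A B. add C f g = zer C A B)) \<and>
     (\<forall>A B D f g h. f \<in> Hom C A B \<and> g \<in> Hom C A B \<and> h \<in> Hom C B D \<longrightarrow>
        cmp C h (add C f g) = add C (cmp C h f) (cmp C h g)) \<and>
     (\<forall>A B D f g h. f \<in> Hom C B D \<and> g \<in> Hom C B D \<and> h \<in> Hom C A B \<longrightarrow>
        cmp C (add C f g) h = add C (cmp C f h) (cmp C g h))"

definition additive :: "('o, 'm, 'x) acat_scheme \<Rightarrow> bool" where
  "additive C \<longleftrightarrow> preadditive C \<and>
     (\<exists>Z\<in>Ob C. \<forall>A\<in>Ob C. Hom C Z A = {zer C Z A} \<and> Hom C A Z = {zer C A Z}) \<and>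
     (\<forall>A\<in>Ob C. \<forall>B\<in>Ob C. \<exists>S\<in>Ob C. \<exists>i1 i2 p1 p2.
        i1 \<in> Hom C A S \<and> i2 \<in> Hom C B S \<and> p1 \<in> Hom C S A \<and> p2 \<in> Hom C S B \<and>
        cmp C p1 i1 = idm C A \<and> cmp C p2 i2 = idm C B \<and>
        cmp C p1 i2 = zer C B A \<and> cmp C p2 i1 = zer C A B \<and>
        add C (cmp C i1 p1) (cmp C i2 p2) = idm C S)"

definition is_iso :: "('o, 'm, 'x) acat_scheme \<Rightarrow> 'o \<Rightarrow> 'o \<Rightarrow> 'm \<Rightarrow> bool" where
  "is_iso C A B f \<longleftrightarrow> f \<in> Hom C A B \<and>
     (\<exists>g\<in>Hom C B A. cmp C g f = idm C A \<and> cmp C f g = idm C B)"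

definition is_kernel :: "('o, 'm, 'x) acat_scheme \<Rightarrow> 'o \<Rightarrow> 'o \<Rightarrow> 'o \<Rightarrow> 'm \<Rightarrow> 'm \<Rightarrow> bool" where
  "is_kernel C A B D i p \<longleftrightarrow> i \<in> Hom C A B \<and> p \<in> Hom C B D \<and> cmp C p i = zer C A D \<and>
     (\<forall>X\<in>Ob C. \<forall>h\<in>Hom C X B. cmp C p h = zer C X D \<longrightarrow> (\<exists>!u. u \<in> Hom C X A \<and> cmp C i u = h))"

definition is_cokernel :: "('o, 'm, 'x) acat_scheme \<Rightarrow> 'o \<Rightarrow> 'o \<Rightarrow> 'o \<Rightarrow> 'm \<Rightarrow> 'm \<Rightarrow> bool" where
  "is_cokernel C A B D i p \<longleftrightarrow> i \<in> Hom C A B \<and> p \<in> Hom C B D \<and> cmp C p i = zer C A D \<and>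
     (\<forall>X\<in>Ob C. \<forall>h\<in>Hom C B X. cmp C h i = zer C A X \<longrightarrow> (\<exists>!u. u \<in> Hom C D X \<and> cmp C u p = h))"

definition kernel_cokernel_pair where
  "kernel_cokernel_pair C A B D i p \<longleftrightarrow> is_kernel C A B D i p \<and> is_cokernel C A B D i p"

definition is_pushout :: "('o, 'm, 'x) acat_scheme \<Rightarrow> 'o \<Rightarrow> 'o \<Rightarrow> 'o \<Rightarrow> 'o \<Rightarrow> 'm \<Rightarrow> 'm \<Rightarrow> 'm \<Rightarrow> 'm \<Rightarrow> bool" where
  "is_pushout C A B A' B' i f i' f' \<longleftrightarrow>
     i \<in> Hom C A B \<and> f \<in> Hom C A A' \<and> i' \<in> Hom C A' B' \<and> f' \<in> Hom C B B' \<and>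
     cmp C i' f = cmp C f' i \<and>
     (\<forall>X\<in>Ob C. \<forall>u\<in>Hom C A' X. \<forall>v\<in>Hom C B X. cmp C u f = cmp C v i \<longrightarrow>
        (\<exists>!w. w \<in> Hom C B' X \<and> cmp C w i' = u \<and> cmp C w f' = v))"

definition is_pullback :: "('o, 'm, 'x) acat_scheme \<Rightarrow> 'o \<Rightarrow> 'o \<Rightarrow> 'o \<Rightarrow> 'o \<Rightarrow> 'm \<Rightarrow> 'm \<Rightarrow> 'm \<Rightarrow> 'm \<Rightarrow> bool" where
  "is_pullback C B D D' B' p h p' h' \<longleftrightarrow>
     p \<in> Hom C B D \<and> h \<in> Hom C D' D \<and> p' \<in> Hom C B' D' \<and> h' \<in> Hom C B' B \<and>
     cmp C p h' = cmp C h p' \<and>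
     (\<forall>X\<in>Ob C. \<forall>u\<in>Hom C X D'. \<forall>v\<in>Hom C X B. cmp C h u = cmp C p v \<longrightarrow>
        (\<exists>!w. w \<in> Hom C X B' \<and> cmp C p' w = u \<and> cmp C h' w = v))"

text \<open>An exact structure is a class of conflations E A B D i p
  (meaning the sequence A --i--> B --p--> D).\<close>
type_synonym ('o, 'm) confl = "'o \<Rightarrow> 'o \<Rightarrow> 'o \<Rightarrow> 'm \<Rightarrow> 'm \<Rightarrow> bool"

definition adm_mono :: "('o, 'm) confl \<Rightarrow> 'o \<Rightarrow> 'o \<Rightarrow> 'm \<Rightarrow> bool" where
  "adm_mono E A B i \<longleftrightarrow> (\<exists>D p. E A B D i p)"

definition adm_epi :: "('o, 'm) confl \<Rightarrow> 'o \<Rightarrow> 'o \<Rightarrow> 'm \<Rightarrow> bool" where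
  "adm_epi E B D p \<longleftrightarrow> (\<exists>A i. E A B D i p)"

definition exact_category :: "('o, 'm, 'x) acat_scheme \<Rightarrow> ('o, 'm) confl \<Rightarrow> bool" where
  "exact_category C E \<longleftrightarrow> additive C \<and>
     (\<forall>A B D i p. E A B D i p \<longrightarrow>
        A \<in> Ob C \<and> B \<in> Ob C \<and> D \<in> Ob C \<and> kernel_cokernel_pair C A B D i p) \<and>
     (\<forall>A B D i p A' B' D' i' p' a b d.
        E A B D i p \<and> is_iso C A' A a \<and> is_iso C B' B b \<and> is_iso C D' D d \<and>
        i' \<in> Hom C A' B' \<and> p' \<in> Hom C B' D' \<and>
        cmp C b i' = cmp C i a \<and> cmp C d p' = cmp C p b \<longrightarrow> E A' B' D' i' p') \<and>
     (\<forall>A\<in>Ob C. adm_mono E A A (idm C A)) \<and>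
     (\<forall>A\<in>Ob C. adm_epi E A A (idm C A)) \<and>
     (\<forall>A B D f g. adm_mono E A B f \<and> adm_mono E B D g \<longrightarrow> adm_mono E A D (cmp C g f)) \<and>
     (\<forall>A B D f g. adm_epi E A B f \<and> adm_epi E B D g \<longrightarrow> adm_epi E A D (cmp C g f)) \<and>
     (\<forall>A B A' i f. adm_mono E A B i \<and> f \<in> Hom C A A' \<longrightarrow>
        (\<exists>B' i' f'. is_pushout C A B A' B' i f i' f' \<and> adm_mono E A' B' i')) \<and>
     (\<forall>B D D' p h. adm_epi E B D p \<and> h \<in> Hom C D' D \<longrightarrow>
        (\<exists>B' p' h'. is_pullback C B D D' B' p h p' h' \<and> adm_epi E B' D' p'))"

text \<open>Yoneda Ext^1(A, K): conflations K --> X --> A modulo the equivalence relation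
  generated by morphisms of extensions (phi : X -> Y with phi i = j and q phi = p).\<close>
definition yoneda_rel :: "('o, 'm, 'x) acat_scheme \<Rightarrow> ('o, 'm) confl \<Rightarrow> 'o \<Rightarrow> 'o \<Rightarrow>
    (('o \<times> 'm \<times> 'm) \<times> ('o \<times> 'm \<times> 'm)) set" where
  "yoneda_rel C E A K = {((X, i, p), (Y, j, q)). E K X A i p \<and> E K Y A j q \<and>
     (\<exists>\<phi>\<in>Hom C X Y. cmp C \<phi> i = j \<and> cmp C q \<phi> = p)}"

definition Ext1 :: "('o, 'm, 'x) acat_scheme \<Rightarrow> ('o, 'm) confl \<Rightarrow> 'o \<Rightarrow> 'o \<Rightarrow>
    ('o \<times> 'm \<times> 'm) set set" where
  "Ext1 C E A K = {(X, i, p). E K X A i p} //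
     ((yoneda_rel C E A K \<union> (yoneda_rel C E A K)\<inverse>)\<^sup>*)"

definition Ext1_zero where
  "Ext1_zero C E A K \<longleftrightarrow> is_singleton (Ext1 C E A K)"

definition is_product :: "('o, 'm, 'x) acat_scheme \<Rightarrow> 'i set \<Rightarrow> ('i \<Rightarrow> 'o) \<Rightarrow> 'o \<Rightarrow> ('i \<Rightarrow> 'm) \<Rightarrow> bool" where
  "is_product C I X P pr \<longleftrightarrow> P \<in> Ob C \<and> (\<forall>i\<in>I. pr i \<in> Hom C P (X i)) \<and>
     (\<forall>Y\<in>Ob C. \<forall>f. (\<forall>i\<in>I. f i \<in> Hom C Y (X i)) \<longrightarrow>
        (\<exists>!u. u \<in> Hom C Y P \<and> (\<forall>i\<in>I. cmp C (pr i) u = f i)))"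

end

theory Submission
  imports Defs
begin

locale excat =
  fixes C :: "('o, 'm, 'x) acat_scheme" and E :: "('o, 'm) confl"
  assumes ex: "exact_category C E"
begin

abbreviation cp (infixl "\<cdot>" 70) where "g \<cdot> f \<equiv> cmp C g f"
abbreviation ad (infixl "\<oplus>" 65) where "f \<oplus> g \<equiv> add C f g"
abbreviation z where "z A B \<equiv> zer C A B"
abbreviation ii where "ii A \<equiv> idm C A"
abbreviation H where "H A B \<equiv> Hom C A B"

lemma add: "additive C" using ex unfolding exact_category_def by blast
lemma pre: "preadditive C" using add unfolding additive_def by blast

lemma hom_ob: "f \<in> H A B \<Longrightarrow> A \<in> Ob C \<and> B \<in> Ob C"
  using pre[unfolded preadditive_def, THEN conjunct1] by blast
lemma id_hom: "A \<in> Ob C \<Longrightarrow> ii A \<in> H A A"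
  using pre[unfolded preadditive_def, THEN conjunct2, THEN conjunct1] by blast
lemma cmp_hom: "f \<in> H A B \<Longrightarrow> g \<in> H B D \<Longrightarrow> g \<cdot> f \<in> H A D"
  using pre[unfolded preadditive_def, THEN conjunct2, THEN conjunct2, THEN conjunct1] by blast
lemma id_l: "f \<in> H A B \<Longrightarrow> ii B \<cdot> f = f"
  using pre[unfolded preadditive_def, THEN conjunct2, THEN conjunct2, THEN conjunct2, THEN conjunct1] by blast
lemma id_r: "f \<in> H A B \<Longrightarrow> f \<cdot> ii A = f"
  using pre[unfolded preadditive_def, THEN conjunct2, THEN conjunct2, THEN conjunct2, THEN conjunct1] by blast
lemma assoc: "f \<in> H A B \<Longrightarrow> g \<in> H B D \<Longrightarrow> h \<in> H D F \<Longrightarrow> h \<cdot> (g \<cdot> f) = (h \<cdot> g) \<cdot> f"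
  using pre[unfolded preadditive_def, THEN conjunct2, THEN conjunct2, THEN conjunct2, THEN conjunct2, THEN conjunct1] by blast
lemma z_hom: "A \<in> Ob C \<Longrightarrow> B \<in> Ob C \<Longrightarrow> z A B \<in> H A B"
  using pre[unfolded preadditive_def, THEN conjunct2, THEN conjunct2, THEN conjunct2, THEN conjunct2, THEN conjunct2, THEN conjunct1] by blast
lemma add_hom: "f \<in> H A B \<Longrightarrow> g \<in> H A B \<Longrightarrow> f \<oplus> g \<in> H A B"
  using pre[unfolded preadditive_def, THEN conjunct2, THEN conjunct2, THEN conjunct2, THEN conjunct2, THEN conjunct2, THEN conjunct2, THEN conjunct1] by blast
lemma add_assoc: "f \<in> H A B \<Longrightarrow> g \<in> H A B \<Longrightarrow> h \<in> H A B \<Longrightarrow> (f \<oplus> g) \<oplus> h = f \<oplus> (g \<oplus> h)"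
  using pre[unfolded preadditive_def, THEN conjunct2, THEN conjunct2, THEN conjunct2, THEN conjunct2, THEN conjunct2, THEN conjunct2, THEN conjunct2, THEN conjunct1] by blast
lemma add_comm: "f \<in> H A B \<Longrightarrow> g \<in> H A B \<Longrightarrow> f \<oplus> g = g \<oplus> f"
  using pre[unfolded preadditive_def, THEN conjunct2, THEN conjunct2, THEN conjunct2, THEN conjunct2, THEN conjunct2, THEN conjunct2, THEN conjunct2, THEN conjunct2, THEN conjunct1] by blast
lemma add_z: "f \<in> H A B \<Longrightarrow> f \<oplus> z A B = f"
  using pre[unfolded preadditive_def, THEN conjunct2, THEN conjunct2, THEN conjunct2, THEN conjunct2, THEN conjunct2, THEN conjunct2, THEN conjunct2, THEN conjunct2, THEN conjunct2, THEN conjunct1] by blast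
lemma add_inv: "f \<in> H A B \<Longrightarrow> \<exists>g\<in>H A B. f \<oplus> g = z A B"
  using pre[unfolded preadditive_def, THEN conjunct2, THEN conjunct2, THEN conjunct2, THEN conjunct2, THEN conjunct2, THEN conjunct2, THEN conjunct2, THEN conjunct2, THEN conjunct2, THEN conjunct2, THEN conjunct1] by blast
lemma distl: "f \<in> H A B \<Longrightarrow> g \<in> H A B \<Longrightarrow> h \<in> H B D \<Longrightarrow> h \<cdot> (f \<oplus> g) = h \<cdot> f \<oplus> h \<cdot> g"
  using pre[unfolded preadditive_def, THEN conjunct2, THEN conjunct2, THEN conjunct2, THEN conjunct2, THEN conjunct2, THEN conjunct2, THEN conjunct2, THEN conjunct2, THEN conjunct2, THEN conjunct2, THEN conjunct2, THEN conjunct1] by blast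
lemma distr: "f \<in> H B D \<Longrightarrow> g \<in> H B D \<Longrightarrow> h \<in> H A B \<Longrightarrow> (f \<oplus> g) \<cdot> h = f \<cdot> h \<oplus> g \<cdot> h"
  using pre[unfolded preadditive_def, THEN conjunct2, THEN conjunct2, THEN conjunct2, THEN conjunct2, THEN conjunct2, THEN conjunct2, THEN conjunct2, THEN conjunct2, THEN conjunct2, THEN conjunct2, THEN conjunct2, THEN conjunct2] by blast

lemma z_add: assumes f: "f \<in> H A B" shows "z A B \<oplus> f = f"
proof -
  have zz: "z A B \<in> H A B" using hom_ob[OF f] z_hom by blast
  show ?thesis using add_comm[OF zz f] add_z[OF f] by simp
qed

lemma cancel: assumes x: "x \<in> H A B" and "x \<oplus> x = x" shows "x = z A B"
proof -
  obtain y where y: "y \<in> H A B" "x \<oplus> y = z A B" using add_inv[OF x] by blast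
  have "(x \<oplus> x) \<oplus> y = x \<oplus> (x \<oplus> y)" using add_assoc[OF x x y(1)] .
  then show ?thesis using assms y add_z[OF x] by simp
qed

lemma cmp_z: assumes h: "h \<in> H B D" and A: "A \<in> Ob C" shows "h \<cdot> z A B = z A D"
proof -
  have B: "B \<in> Ob C" "D \<in> Ob C" using hom_ob[OF h] by auto
  have zz: "z A B \<in> H A B" using z_hom[OF A B(1)] .
  have "z A B \<oplus> z A B = z A B" using add_z[OF zz] .
  then have "h \<cdot> z A B \<oplus> h \<cdot> z A B = h \<cdot> z A B" using distl[OF zz zz h] by simp
  then show ?thesis using cancel cmp_hom[OF zz h] by blast
qed

lemma z_cmp: assumes f: "f \<in> H A B" and D: "D \<in> Ob C" shows "z B D \<cdot> f = z A D"
proof -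
  have B: "A \<in> Ob C" "B \<in> Ob C" using hom_ob[OF f] by auto
  have zz: "z B D \<in> H B D" using z_hom[OF B(2) D] .
  have "z B D \<oplus> z B D = z B D" using add_z[OF zz] .
  then have "z B D \<cdot> f \<oplus> z B D \<cdot> f = z B D \<cdot> f" using distr[OF zz zz f] by simp
  then show ?thesis using cancel cmp_hom[OF f zz] by blast
qed

lemma E_ob: "E A B D i p \<Longrightarrow> A \<in> Ob C \<and> B \<in> Ob C \<and> D \<in> Ob C"
  using ex[unfolded exact_category_def, THEN conjunct2, THEN conjunct1] by blast
lemma E_ker: "E A B D i p \<Longrightarrow> is_kernel C A B D i p"
  using ex[unfolded exact_category_def, THEN conjunct2, THEN conjunct1] unfolding kernel_cokernel_pair_def by blast
lemma E_coker: "E A B D i p \<Longrightarrow> is_cokernel C A B D i p"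
  using ex[unfolded exact_category_def, THEN conjunct2, THEN conjunct1] unfolding kernel_cokernel_pair_def by blast
lemma E_iso: "E A B D i p \<Longrightarrow> is_iso C A' A a \<Longrightarrow> is_iso C B' B b \<Longrightarrow> is_iso C D' D d \<Longrightarrow>
        i' \<in> H A' B' \<Longrightarrow> p' \<in> H B' D' \<Longrightarrow>
        b \<cdot> i' = i \<cdot> a \<Longrightarrow> d \<cdot> p' = p \<cdot> b \<Longrightarrow> E A' B' D' i' p'"
  by (rule ex[unfolded exact_category_def, THEN conjunct2, THEN conjunct2, THEN conjunct1, rule_format], (intro conjI)?, assumption+)
lemma PO: "adm_mono E A B i \<Longrightarrow> f \<in> H A A' \<Longrightarrow>
        (\<exists>B' i' f'. is_pushout C A B A' B' i f i' f' \<and> adm_mono E A' B' i')"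
  by (rule ex[unfolded exact_category_def, THEN conjunct2, THEN conjunct2, THEN conjunct2, THEN conjunct2, THEN conjunct2, THEN conjunct2, THEN conjunct2, THEN conjunct1, rule_format], (intro conjI)?, assumption+)
lemma PB: "adm_epi E B D p \<Longrightarrow> h \<in> H D' D \<Longrightarrow>
        (\<exists>B' p' h'. is_pullback C B D D' B' p h p' h' \<and> adm_epi E B' D' p')"
  by (rule ex[unfolded exact_category_def, THEN conjunct2, THEN conjunct2, THEN conjunct2, THEN conjunct2, THEN conjunct2, THEN conjunct2, THEN conjunct2, THEN conjunct2, rule_format], (intro conjI)?, assumption+)

lemma iso_id: "A \<in> Ob C \<Longrightarrow> is_iso C A A (ii A)"
  unfolding is_iso_def using id_hom id_l by blast

lemma ker_fac: assumes k: "is_kernel C K B D i p" and X: "X \<in> Ob C"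
  and h: "h \<in> H X B" and e: "p \<cdot> h = z X D" shows "\<exists>u\<in>H X K. i \<cdot> u = h"
proof -
  have "\<exists>!u. u \<in> H X K \<and> i \<cdot> u = h" using k[unfolded is_kernel_def, THEN conjunct2, THEN conjunct2, THEN conjunct2] X h e by simp
  then show ?thesis by auto
qed

lemma ker_mono: assumes k: "is_kernel C K B D i p" and X: "X \<in> Ob C"
  and u: "u \<in> H X K" and u': "u' \<in> H X K" and eq: "i \<cdot> u = i \<cdot> u'" shows "u = u'"
proof -
  have i: "i \<in> H K B" and p: "p \<in> H B D" and pi: "p \<cdot> i = z K D" using k unfolding is_kernel_def by auto
  have iu: "i \<cdot> u \<in> H X B" using cmp_hom[OF u i] .
  have D: "D \<in> Ob C" using hom_ob[OF p] by blast
  have "p \<cdot> (i \<cdot> u) = (p \<cdot> i) \<cdot> u" using assoc[OF u i p] .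
  also have "\<dots> = z X D" using pi z_cmp[OF u D] by simp
  finally have e: "p \<cdot> (i \<cdot> u) = z X D" .
  have "\<exists>!v. v \<in> H X K \<and> i \<cdot> v = i \<cdot> u" using k[unfolded is_kernel_def, THEN conjunct2, THEN conjunct2, THEN conjunct2] X iu e by simp
  then show ?thesis using u u' eq by auto
qed

lemma coker_fac: assumes k: "is_cokernel C K B D i p" and X: "X \<in> Ob C"
  and h: "h \<in> H B X" and e: "h \<cdot> i = z K X" shows "\<exists>u\<in>H D X. u \<cdot> p = h"
proof -
  have "\<exists>!u. u \<in> H D X \<and> u \<cdot> p = h" using k[unfolded is_cokernel_def, THEN conjunct2, THEN conjunct2, THEN conjunct2] X h e by simp
  then show ?thesis by auto
qed

lemma coker_epi: assumes k: "is_cokernel C K B D i p" and X: "X \<in> Ob C"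
  and u: "u \<in> H D X" and u': "u' \<in> H D X" and eq: "u \<cdot> p = u' \<cdot> p" shows "u = u'"
proof -
  have i: "i \<in> H K B" and p: "p \<in> H B D" and pi: "p \<cdot> i = z K D" using k unfolding is_cokernel_def by auto
  have iu: "u \<cdot> p \<in> H B X" using cmp_hom[OF p u] .
  have K: "K \<in> Ob C" using hom_ob[OF i] by blast
  have "(u \<cdot> p) \<cdot> i = u \<cdot> (p \<cdot> i)" using assoc[OF i p u] by simp
  also have "\<dots> = z K X" using pi cmp_z[OF u K] by simp
  finally have e: "(u \<cdot> p) \<cdot> i = z K X" .
  have "\<exists>!v. v \<in> H D X \<and> v \<cdot> p = u \<cdot> p" using k[unfolded is_cokernel_def, THEN conjunct2, THEN conjunct2, THEN conjunct2] X iu e by simp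
  then show ?thesis using u u' eq by auto
qed


lemma pb_univ: assumes pb: "is_pullback C B D D' B' p h p' h'" and X: "X \<in> Ob C"
  and u: "u \<in> H X D'" and v: "v \<in> H X B" and e: "h \<cdot> u = p \<cdot> v"
  shows "\<exists>!w. w \<in> H X B' \<and> p' \<cdot> w = u \<and> h' \<cdot> w = v"
  using pb[unfolded is_pullback_def, THEN conjunct2, THEN conjunct2, THEN conjunct2, THEN conjunct2, THEN conjunct2] X u v e by simp

lemma po_univ: assumes po: "is_pushout C A B A' B' i f i' f'" and X: "X \<in> Ob C"
  and u: "u \<in> H A' X" and v: "v \<in> H B X" and e: "u \<cdot> f = v \<cdot> i"
  shows "\<exists>!w. w \<in> H B' X \<and> w \<cdot> i' = u \<and> w \<cdot> f' = v"
  using po[unfolded is_pushout_def, THEN conjunct2, THEN conjunct2, THEN conjunct2, THEN conjunct2, THEN conjunct2] X u v e by simp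

lemma pb_conf:
  assumes EE: "E K L M f g" and h: "h \<in> H A M"
  shows "\<exists>X i' p' h'. E K X A i' p' \<and> is_pullback C L M A X g h p' h' \<and> h' \<cdot> i' = f"
proof -
  have ae: "adm_epi E L M g" using EE unfolding adm_epi_def by blast
  obtain X p' h' where pb: "is_pullback C L M A X g h p' h'" and ae': "adm_epi E X A p'"
    using PB[OF ae h] by blast
  obtain K' k' where E': "E K' X A k' p'" using ae' unfolding adm_epi_def by blast
  have p': "p' \<in> H X A" and h': "h' \<in> H X L" and sq: "g \<cdot> h' = h \<cdot> p'"
    using pb unfolding is_pullback_def by auto
  have kf: "is_kernel C K L M f g" using E_ker[OF EE] .
  have kk: "is_kernel C K' X A k' p'" using E_ker[OF E'] .
  have f: "f \<in> H K L" and g: "g \<in> H L M" and gf: "g \<cdot> f = z K M" using kf unfolding is_kernel_def by auto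
  have k': "k' \<in> H K' X" and pk: "p' \<cdot> k' = z K' A" using kk unfolding is_kernel_def by auto
  have K: "K \<in> Ob C" and K': "K' \<in> Ob C" and Aob: "A \<in> Ob C" and Mob: "M \<in> Ob C" and Xob: "X \<in> Ob C"
    using E_ob[OF EE] E_ob[OF E'] by auto
  have zKA: "z K A \<in> H K A" using z_hom[OF K Aob] .
  have "h \<cdot> z K A = g \<cdot> f" using cmp_z[OF h K] gf by simp
  then obtain i' where i': "i' \<in> H K X" "p' \<cdot> i' = z K A" "h' \<cdot> i' = f"
    using pb_univ[OF pb K zKA f] by blast
  obtain a where a: "a \<in> H K K'" "k' \<cdot> a = i'" using ker_fac[OF kk K i'(1) i'(2)] by blast
  have hk: "h' \<cdot> k' \<in> H K' L" using cmp_hom[OF k' h'] .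
  have "g \<cdot> (h' \<cdot> k') = (g \<cdot> h') \<cdot> k'" using assoc[OF k' h' g] .
  also have "\<dots> = h \<cdot> (p' \<cdot> k')" using sq assoc[OF k' p' h] by simp
  also have "\<dots> = z K' M" using pk cmp_z[OF h K'] by simp
  finally have ghk: "g \<cdot> (h' \<cdot> k') = z K' M" .
  obtain a' where a': "a' \<in> H K' K" "f \<cdot> a' = h' \<cdot> k'" using ker_fac[OF kf K' hk ghk] by blast
  have zKA': "z K' A \<in> H K' A" using z_hom[OF K' Aob] .
  have e2: "h \<cdot> z K' A = g \<cdot> (h' \<cdot> k')" using cmp_z[OF h K'] ghk by simp
  have ia: "i' \<cdot> a' \<in> H K' X" using cmp_hom[OF a'(1) i'(1)] .
  have "p' \<cdot> (i' \<cdot> a') = z K' A" using assoc[OF a'(1) i'(1) p'] i'(2) z_cmp[OF a'(1) Aob] by simp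
  moreover have "h' \<cdot> (i' \<cdot> a') = h' \<cdot> k'" using assoc[OF a'(1) i'(1) h'] i'(3) a'(2) by simp
  ultimately have ia_eq: "i' \<cdot> a' = k'"
    using pb_univ[OF pb K' zKA' hk e2] ia k' pk by blast
  have aa: "a \<cdot> a' \<in> H K' K'" using cmp_hom[OF a'(1) a(1)] .
  have "k' \<cdot> (a \<cdot> a') = k' \<cdot> ii K'" using assoc[OF a'(1) a(1) k'] a(2) ia_eq id_r[OF k'] by simp
  then have aa': "a \<cdot> a' = ii K'" using ker_mono[OF kk K' aa id_hom[OF K']] by blast
  have aa2: "a' \<cdot> a \<in> H K K" using cmp_hom[OF a(1) a'(1)] .
  have "f \<cdot> (a' \<cdot> a) = (h' \<cdot> k') \<cdot> a" using assoc[OF a(1) a'(1) f] a'(2) by simp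
  also have "\<dots> = f \<cdot> ii K" using assoc[OF a(1) k' h'] a(2) i'(3) id_r[OF f] by simp
  finally have aa2': "a' \<cdot> a = ii K" using ker_mono[OF kf K aa2 id_hom[OF K]] by blast
  have iso: "is_iso C K K' a" unfolding is_iso_def using a(1) a'(1) aa' aa2' by blast
  have "E K X A i' p'"
    by (rule E_iso[OF E' iso iso_id[OF Xob] iso_id[OF Aob] i'(1) p'])
       (use id_l[OF i'(1)] a(2) id_l[OF p'] id_r[OF p'] in auto)
  then show ?thesis using pb i'(3) by blast
qed

lemma pb_split:
  assumes EE: "E K L M f g" and A: "A \<in> Ob C"
  shows "\<exists>X i' p'. E K X A i' p' \<and> (\<exists>s\<in>H A X. p' \<cdot> s = ii A)"
proof -
  have M: "M \<in> Ob C" and L: "L \<in> Ob C" using E_ob[OF EE] by auto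
  have h: "z A M \<in> H A M" using z_hom[OF A M] .
  obtain X i' p' h' where E': "E K X A i' p'" and pb: "is_pullback C L M A X g (z A M) p' h'"
    using pb_conf[OF EE h] by blast
  have g: "g \<in> H L M" using E_ker[OF EE] unfolding is_kernel_def by auto
  have "z A M \<cdot> ii A = g \<cdot> z A L" using id_r[OF h] cmp_z[OF g A] by simp
  then obtain s where "s \<in> H A X" "p' \<cdot> s = ii A"
    using pb_univ[OF pb A id_hom[OF A] z_hom[OF A L]] by blast
  then show ?thesis using E' by blast
qed


lemma sec_ret: assumes EE: "E K X A i p" and s: "s \<in> H A X" and ps: "p \<cdot> s = ii A"
  shows "\<exists>r\<in>H X K. r \<cdot> i = ii K"
proof -
  have kk: "is_kernel C K X A i p" using E_ker[OF EE] .
  have i: "i \<in> H K X" and p: "p \<in> H X A" and pi: "p \<cdot> i = z K A" using kk unfolding is_kernel_def by auto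
  have K: "K \<in> Ob C" and X: "X \<in> Ob C" and A: "A \<in> Ob C" using E_ob[OF EE] by auto
  have sp: "s \<cdot> p \<in> H X X" using cmp_hom[OF p s] .
  obtain n where n: "n \<in> H X X" "s \<cdot> p \<oplus> n = z X X" using add_inv[OF sp] by blast
  have idX: "ii X \<in> H X X" using id_hom[OF X] .
  define t where "t = ii X \<oplus> n"
  have t: "t \<in> H X X" unfolding t_def using add_hom[OF idX n(1)] .
  have psp: "p \<cdot> (s \<cdot> p) = p" using assoc[OF p s p] ps id_l[OF p] by simp
  have "p \<cdot> t = p \<cdot> ii X \<oplus> p \<cdot> n" unfolding t_def using distl[OF idX n(1) p] .
  also have "\<dots> = p \<cdot> (s \<cdot> p) \<oplus> p \<cdot> n" using id_r[OF p] psp by simp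
  also have "\<dots> = p \<cdot> (s \<cdot> p \<oplus> n)" using distl[OF sp n(1) p] by simp
  also have "\<dots> = z X A" using n(2) cmp_z[OF p X] by simp
  finally have pt: "p \<cdot> t = z X A" .
  obtain r where r: "r \<in> H X K" "i \<cdot> r = t" using ker_fac[OF kk X t pt] by blast
  have spi: "(s \<cdot> p) \<cdot> i = z K X" using assoc[OF i p s] pi cmp_z[OF s K] by simp
  have "(s \<cdot> p) \<cdot> i \<oplus> n \<cdot> i = (s \<cdot> p \<oplus> n) \<cdot> i" using distr[OF sp n(1) i] by simp
  also have "\<dots> = z K X" using n(2) z_cmp[OF i X] by simp
  finally have "n \<cdot> i = z K X" using spi z_add[OF cmp_hom[OF i n(1)]] by simp
  then have "t \<cdot> i = i" unfolding t_def using distr[OF idX n(1) i] id_l[OF i] add_z[OF i] by simp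
  then have "i \<cdot> (r \<cdot> i) = i \<cdot> ii K" using assoc[OF i r(1) i] r(2) id_r[OF i] by simp
  then have "r \<cdot> i = ii K" using ker_mono[OF kk K cmp_hom[OF i r(1)] id_hom[OF K]] by blast
  then show ?thesis using r(1) by blast
qed

lemma ret_sec: assumes EE: "E K X A i p" and r: "r \<in> H X K" and ri: "r \<cdot> i = ii K"
  shows "\<exists>s\<in>H A X. p \<cdot> s = ii A"
proof -
  have kk: "is_cokernel C K X A i p" using E_coker[OF EE] .
  have i: "i \<in> H K X" and p: "p \<in> H X A" and pi: "p \<cdot> i = z K A" using kk unfolding is_cokernel_def by auto
  have K: "K \<in> Ob C" and X: "X \<in> Ob C" and A: "A \<in> Ob C" using E_ob[OF EE] by auto
  have ir: "i \<cdot> r \<in> H X X" using cmp_hom[OF r i] .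
  obtain n where n: "n \<in> H X X" "i \<cdot> r \<oplus> n = z X X" using add_inv[OF ir] by blast
  have idX: "ii X \<in> H X X" using id_hom[OF X] .
  define t where "t = ii X \<oplus> n"
  have t: "t \<in> H X X" unfolding t_def using add_hom[OF idX n(1)] .
  have iri: "(i \<cdot> r) \<cdot> i = i" using assoc[OF i r i] ri id_r[OF i] by simp
  have "t \<cdot> i = ii X \<cdot> i \<oplus> n \<cdot> i" unfolding t_def using distr[OF idX n(1) i] .
  also have "\<dots> = (i \<cdot> r) \<cdot> i \<oplus> n \<cdot> i" using id_l[OF i] iri by simp
  also have "\<dots> = (i \<cdot> r \<oplus> n) \<cdot> i" using distr[OF ir n(1) i] by simp
  also have "\<dots> = z K X" using n(2) z_cmp[OF i X] by simp
  finally have ti: "t \<cdot> i = z K X" .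
  obtain s where s: "s \<in> H A X" "s \<cdot> p = t" using coker_fac[OF kk X t ti] by blast
  have pir: "p \<cdot> (i \<cdot> r) = z X A" using assoc[OF r i p] pi z_cmp[OF r A] by simp
  have "p \<cdot> (i \<cdot> r) \<oplus> p \<cdot> n = p \<cdot> (i \<cdot> r \<oplus> n)" using distl[OF ir n(1) p] by simp
  also have "\<dots> = z X A" using n(2) cmp_z[OF p X] by simp
  finally have "p \<cdot> n = z X A" using pir z_add[OF cmp_hom[OF n(1) p]] by simp
  then have "p \<cdot> t = p" unfolding t_def using distl[OF idX n(1) p] id_r[OF p] add_z[OF p] by simp
  then have "(p \<cdot> s) \<cdot> p = ii A \<cdot> p" using assoc[OF p s(1) p] s(2) id_l[OF p] by simp
  then have "p \<cdot> s = ii A" using coker_epi[OF kk A cmp_hom[OF s(1) p] id_hom[OF A]] by blast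
  then show ?thesis using s(1) by blast
qed

definition spl where "spl A K x \<longleftrightarrow> (case x of (X, i, p) \<Rightarrow> E K X A i p \<and> (\<exists>s\<in>H A X. p \<cdot> s = ii A))"

lemma spl_step: assumes "(x, y) \<in> yoneda_rel C E A K \<union> (yoneda_rel C E A K)\<inverse>" and "spl A K x"
  shows "spl A K y"
proof -
  obtain X i p where x: "x = (X, i, p)" by (cases x) auto
  obtain Y j q where y: "y = (Y, j, q)" by (cases y) auto
  show ?thesis using assms(1) unfolding Un_iff
  proof
    assume "(x, y) \<in> yoneda_rel C E A K"
    then have "E K X A i p \<and> E K Y A j q \<and> (\<exists>\<phi>\<in>H X Y. \<phi> \<cdot> i = j \<and> q \<cdot> \<phi> = p)"
      unfolding x y yoneda_rel_def by simp
    then have Ex: "E K X A i p" and Ey: "E K Y A j q" and "\<exists>\<phi>\<in>H X Y. \<phi> \<cdot> i = j \<and> q \<cdot> \<phi> = p"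
      by simp_all
    then obtain \<phi> where ph: "\<phi> \<in> H X Y" "\<phi> \<cdot> i = j" "q \<cdot> \<phi> = p" by blast
    obtain s where s: "s \<in> H A X" "p \<cdot> s = ii A" using assms(2) unfolding x spl_def by auto
    have q: "q \<in> H Y A" using E_ker[OF Ey] unfolding is_kernel_def by auto
    have "q \<cdot> (\<phi> \<cdot> s) = ii A" using assoc[OF s(1) ph(1) q] ph(3) s(2) by simp
    then show ?thesis unfolding y spl_def using Ey cmp_hom[OF s(1) ph(1)] by auto
  next
    assume "(x, y) \<in> (yoneda_rel C E A K)\<inverse>"
    then have "E K Y A j q \<and> E K X A i p \<and> (\<exists>\<phi>\<in>H Y X. \<phi> \<cdot> j = i \<and> p \<cdot> \<phi> = q)"
      unfolding x y yoneda_rel_def by simp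
    then have Ex: "E K X A i p" and Ey: "E K Y A j q" and "\<exists>\<phi>\<in>H Y X. \<phi> \<cdot> j = i \<and> p \<cdot> \<phi> = q"
      by simp_all
    then obtain \<phi> where ph: "\<phi> \<in> H Y X" "\<phi> \<cdot> j = i" "p \<cdot> \<phi> = q" by blast
    obtain s where s: "s \<in> H A X" "p \<cdot> s = ii A" using assms(2) unfolding x spl_def by auto
    obtain r where r: "r \<in> H X K" "r \<cdot> i = ii K" using sec_ret[OF Ex s] by blast
    have j: "j \<in> H K Y" using E_ker[OF Ey] unfolding is_kernel_def by auto
    have "(r \<cdot> \<phi>) \<cdot> j = ii K" using assoc[OF j ph(1) r(1)] ph(2) r(2) by simp
    then obtain s' where "s' \<in> H A Y" "q \<cdot> s' = ii A" using ret_sec[OF Ey cmp_hom[OF ph(1) r(1)]] by blast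
    then show ?thesis unfolding y spl_def using Ey by auto
  qed
qed

lemma spl_star: assumes "(x, y) \<in> (yoneda_rel C E A K \<union> (yoneda_rel C E A K)\<inverse>)\<^sup>*" and "spl A K x"
  shows "spl A K y"
  using assms by (induction rule: rtrancl_induct) (auto intro: spl_step)

lemma lift:
  assumes EE: "E K L M f g" and h: "h \<in> H A M" and A: "A \<in> Ob C" and Z: "Ext1_zero C E A K"
  shows "\<exists>l\<in>H A L. g \<cdot> l = h"
proof -
  obtain X0 i0 p0 where s0: "spl A K (X0, i0, p0)" using pb_split[OF EE A] unfolding spl_def by auto
  obtain X i' p' h' where E': "E K X A i' p'" and pb: "is_pullback C L M A X g h p' h'"
    using pb_conf[OF EE h] by blast
  let ?S = "{(X, i, p). E K X A i p}"
  let ?R = "(yoneda_rel C E A K \<union> (yoneda_rel C E A K)\<inverse>)\<^sup>*"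
  have in0: "(X0, i0, p0) \<in> ?S" using s0 unfolding spl_def by auto
  have in1: "(X, i', p') \<in> ?S" using E' by auto
  obtain c where c: "Ext1 C E A K = {c}" using Z unfolding Ext1_zero_def is_singleton_def by blast
  have "?R `` {(X0, i0, p0)} \<in> Ext1 C E A K" unfolding Ext1_def using in0 by (rule quotientI)
  moreover have "?R `` {(X, i', p')} \<in> Ext1 C E A K" unfolding Ext1_def using in1 by (rule quotientI)
  ultimately have eq: "?R `` {(X0, i0, p0)} = ?R `` {(X, i', p')}" using c by simp
  have "(X, i', p') \<in> ?R `` {(X, i', p')}" by (simp only: Image_singleton_iff rtrancl.rtrancl_refl)
  then have "(X, i', p') \<in> ?R `` {(X0, i0, p0)}" by (simp only: eq)
  then have "((X0, i0, p0), (X, i', p')) \<in> ?R" by (simp only: Image_singleton_iff)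
  then have "spl A K (X, i', p')" using spl_star s0 by blast
  then obtain s where s: "s \<in> H A X" "p' \<cdot> s = ii A" unfolding spl_def by auto
  have p': "p' \<in> H X A" and h': "h' \<in> H X L" and sq: "g \<cdot> h' = h \<cdot> p'"
    using pb unfolding is_pullback_def by auto
  have g: "g \<in> H L M" using E_ker[OF EE] unfolding is_kernel_def by auto
  have "g \<cdot> (h' \<cdot> s) = (g \<cdot> h') \<cdot> s" using assoc[OF s(1) h' g] .
  also have "\<dots> = h \<cdot> (p' \<cdot> s)" using sq assoc[OF s(1) p' h] by simp
  also have "\<dots> = h" using s(2) id_r[OF h] by simp
  finally have "g \<cdot> (h' \<cdot> s) = h" .
  then show ?thesis using cmp_hom[OF s(1) h'] by blast
qed


lemma prod_ex: assumes P: "is_product C I X P pr" and Y: "Y \<in> Ob C" and f: "\<forall>i\<in>I. f i \<in> H Y (X i)"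
  shows "\<exists>u\<in>H Y P. \<forall>i\<in>I. pr i \<cdot> u = f i"
proof -
  have "\<exists>!u. u \<in> H Y P \<and> (\<forall>i\<in>I. pr i \<cdot> u = f i)"
    using P[unfolded is_product_def, THEN conjunct2, THEN conjunct2] Y f by simp
  then show ?thesis by auto
qed

lemma prod_uniq: assumes P: "is_product C I X P pr" and Y: "Y \<in> Ob C"
  and u: "u \<in> H Y P" and u': "u' \<in> H Y P" and e: "\<forall>i\<in>I. pr i \<cdot> u = pr i \<cdot> u'"
  shows "u = u'"
proof -
  have pr: "\<forall>i\<in>I. pr i \<in> H P (X i)" using P unfolding is_product_def by blast
  have "\<forall>i\<in>I. pr i \<cdot> u \<in> H Y (X i)" using pr u cmp_hom by blast
  then have "\<exists>!w. w \<in> H Y P \<and> (\<forall>i\<in>I. pr i \<cdot> w = pr i \<cdot> u)"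
    using P[unfolded is_product_def, THEN conjunct2, THEN conjunct2] Y by simp
  then show ?thesis using u u' e by auto
qed

lemma prod_ob: "is_product C I X P pr \<Longrightarrow> P \<in> Ob C \<and> (\<forall>i\<in>I. pr i \<in> H P (X i))"
  unfolding is_product_def by blast

end

context excat begin

lemma main:
  assumes EE: "\<forall>i\<in>I. E (K i) (L i) (M i) (f i) (g i)"
    and PKp: "is_product C I K PK pK" and PLp: "is_product C I L PL pL" and PMp: "is_product C I M PM pM"
    and A: "A \<in> Ob C" and q: "q \<in> H A PM" and aq: "adm_epi E A PM q"
    and Z: "\<forall>i\<in>I. Ext1_zero C E A (K i)"
    and F: "F \<in> H PK PL" and FF: "\<forall>i\<in>I. pL i \<cdot> F = f i \<cdot> pK i"
    and G: "G \<in> H PL PM" and GG: "\<forall>i\<in>I. pM i \<cdot> G = g i \<cdot> pL i"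
  shows "E PK PL PM F G"
proof -
  have PKo: "PK \<in> Ob C" and pKh: "\<forall>i\<in>I. pK i \<in> H PK (K i)" using prod_ob[OF PKp] by auto
  have PLo: "PL \<in> Ob C" and pLh: "\<forall>i\<in>I. pL i \<in> H PL (L i)" using prod_ob[OF PLp] by auto
  have PMo: "PM \<in> Ob C" and pMh: "\<forall>i\<in>I. pM i \<in> H PM (M i)" using prod_ob[OF PMp] by auto
  have kf: "\<forall>i\<in>I. is_kernel C (K i) (L i) (M i) (f i) (g i)" using EE E_ker by blast
  have fh: "\<forall>i\<in>I. f i \<in> H (K i) (L i)" and gh: "\<forall>i\<in>I. g i \<in> H (L i) (M i)"
    and gf: "\<forall>i\<in>I. g i \<cdot> f i = z (K i) (M i)"
    using kf unfolding is_kernel_def by auto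
  have Ko: "\<forall>i\<in>I. K i \<in> Ob C \<and> L i \<in> Ob C \<and> M i \<in> Ob C" using EE E_ob by blast
  have "\<forall>i\<in>I. \<exists>l. l \<in> H A (L i) \<and> g i \<cdot> l = pM i \<cdot> q"
  proof
    fix i assume i: "i \<in> I"
    have "\<exists>l\<in>H A (L i). g i \<cdot> l = pM i \<cdot> q"
      using lift[OF EE[rule_format, OF i] cmp_hom[OF q pMh[rule_format, OF i]] A Z[rule_format, OF i]] .
    then show "\<exists>l. l \<in> H A (L i) \<and> g i \<cdot> l = pM i \<cdot> q" by blast
  qed
  from bchoice[OF this] obtain lf where lf: "\<forall>i\<in>I. lf i \<in> H A (L i) \<and> g i \<cdot> lf i = pM i \<cdot> q" by blast
  obtain l where l: "l \<in> H A PL" "\<forall>i\<in>I. pL i \<cdot> l = lf i" using prod_ex[OF PLp A] lf by blast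
  have Gl: "G \<cdot> l = q"
  proof (rule prod_uniq[OF PMp A cmp_hom[OF l(1) G] q], intro ballI)
    fix i assume i: "i \<in> I"
    have "pM i \<cdot> (G \<cdot> l) = (pM i \<cdot> G) \<cdot> l" using assoc[OF l(1) G pMh[rule_format, OF i]] .
    also have "\<dots> = g i \<cdot> (pL i \<cdot> l)" using GG i assoc[OF l(1) pLh[rule_format, OF i] gh[rule_format, OF i]] by simp
    also have "\<dots> = pM i \<cdot> q" using l(2) lf i by simp
    finally show "pM i \<cdot> (G \<cdot> l) = pM i \<cdot> q" .
  qed
  have Fmono: "x = y" if X: "X \<in> Ob C" and x: "x \<in> H X PK" and y: "y \<in> H X PK" and e: "F \<cdot> x = F \<cdot> y" for X x y
  proof (rule prod_uniq[OF PKp X x y], intro ballI)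
    fix i assume i: "i \<in> I"
    have pk: "pK i \<in> H PK (K i)" using pKh i by blast
    have fi: "f i \<in> H (K i) (L i)" using fh i by blast
    have pl: "pL i \<in> H PL (L i)" using pLh i by blast
    have "f i \<cdot> (pK i \<cdot> x) = pL i \<cdot> (F \<cdot> x)" using assoc[OF x pk fi] assoc[OF x F pl] FF i by simp
    also have "\<dots> = f i \<cdot> (pK i \<cdot> y)" using assoc[OF y pk fi] assoc[OF y F pl] FF i e by simp
    finally show "pK i \<cdot> x = pK i \<cdot> y"
      using ker_mono[OF kf[rule_format, OF i] X cmp_hom[OF x pk] cmp_hom[OF y pk]] by blast
  qed
  have Ffac: "\<exists>\<rho>\<in>H X PK. F \<cdot> \<rho> = t" if X: "X \<in> Ob C" and t: "t \<in> H X PL" and e: "G \<cdot> t = z X PM" for X t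
  proof -
    have "\<forall>i\<in>I. \<exists>u. u \<in> H X (K i) \<and> f i \<cdot> u = pL i \<cdot> t"
    proof
      fix i assume i: "i \<in> I"
      have pl: "pL i \<in> H PL (L i)" using pLh i by blast
      have pm: "pM i \<in> H PM (M i)" using pMh i by blast
      have gi: "g i \<in> H (L i) (M i)" using gh i by blast
      have "g i \<cdot> (pL i \<cdot> t) = pM i \<cdot> (G \<cdot> t)" using assoc[OF t pl gi] assoc[OF t G pm] GG i by simp
      also have "\<dots> = z X (M i)" using e cmp_z[OF pm X] by simp
      finally have "g i \<cdot> (pL i \<cdot> t) = z X (M i)" .
      then show "\<exists>u. u \<in> H X (K i) \<and> f i \<cdot> u = pL i \<cdot> t"
        using ker_fac[OF kf[rule_format, OF i] X cmp_hom[OF t pl]] by blast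
    qed
    from bchoice[OF this] obtain uf where uf: "\<forall>i\<in>I. uf i \<in> H X (K i) \<and> f i \<cdot> uf i = pL i \<cdot> t" by blast
    obtain \<rho> where r: "\<rho> \<in> H X PK" "\<forall>i\<in>I. pK i \<cdot> \<rho> = uf i" using prod_ex[OF PKp X] uf by blast
    have "F \<cdot> \<rho> = t"
    proof (rule prod_uniq[OF PLp X cmp_hom[OF r(1) F] t], intro ballI)
      fix i assume i: "i \<in> I"
      have pk: "pK i \<in> H PK (K i)" using pKh i by blast
      have fi: "f i \<in> H (K i) (L i)" using fh i by blast
      have pl: "pL i \<in> H PL (L i)" using pLh i by blast
      have "pL i \<cdot> (F \<cdot> \<rho>) = f i \<cdot> (pK i \<cdot> \<rho>)" using assoc[OF r(1) pk fi] assoc[OF r(1) F pl] FF i by simp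
      also have "\<dots> = pL i \<cdot> t" using r(2) uf i by simp
      finally show "pL i \<cdot> (F \<cdot> \<rho>) = pL i \<cdot> t" .
    qed
    then show ?thesis using r(1) by blast
  qed
  have zPKPM: "z PK PM \<in> H PK PM" using z_hom[OF PKo PMo] .
  have GF: "G \<cdot> F = z PK PM"
  proof (rule prod_uniq[OF PMp PKo cmp_hom[OF F G] zPKPM], intro ballI)
    fix i assume i: "i \<in> I"
    have pk: "pK i \<in> H PK (K i)" using pKh i by blast
    have fi: "f i \<in> H (K i) (L i)" using fh i by blast
    have pl: "pL i \<in> H PL (L i)" using pLh i by blast
    have pm: "pM i \<in> H PM (M i)" using pMh i by blast
    have gi: "g i \<in> H (L i) (M i)" using gh i by blast
    have "pM i \<cdot> (G \<cdot> F) = g i \<cdot> (pL i \<cdot> F)" using assoc[OF F G pm] assoc[OF F pl gi] GG i by simp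
    also have "\<dots> = (g i \<cdot> f i) \<cdot> pK i" using FF i assoc[OF pk fi gi] by simp
    also have "\<dots> = z PK (M i)" using gf i z_cmp[OF pk] Ko i by simp
    also have "\<dots> = pM i \<cdot> z PK PM" using cmp_z[OF pm PKo] by simp
    finally show "pM i \<cdot> (G \<cdot> F) = pM i \<cdot> z PK PM" .
  qed
  obtain N n where En: "E N A PM n q" using aq unfolding adm_epi_def by blast
  have kn: "is_kernel C N A PM n q" using E_ker[OF En] .
  have cn: "is_cokernel C N A PM n q" using E_coker[OF En] .
  have n: "n \<in> H N A" and qn: "q \<cdot> n = z N PM" using kn unfolding is_kernel_def by auto
  have No: "N \<in> Ob C" using E_ob[OF En] by blast
  have ln: "l \<cdot> n \<in> H N PL" using cmp_hom[OF n l(1)] .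
  have "G \<cdot> (l \<cdot> n) = z N PM" using assoc[OF n l(1) G] Gl qn by simp
  then obtain \<kappa> where ka: "\<kappa> \<in> H N PK" "F \<cdot> \<kappa> = l \<cdot> n" using Ffac[OF No ln] by blast
  have am: "adm_mono E N A n" using En unfolding adm_mono_def by blast
  obtain Y i' f' where po: "is_pushout C N A PK Y n \<kappa> i' f'" and am': "adm_mono E PK Y i'"
    using PO[OF am ka(1)] by blast
  have i': "i' \<in> H PK Y" and f': "f' \<in> H A Y" and sqpo: "i' \<cdot> \<kappa> = f' \<cdot> n"
    using po unfolding is_pushout_def by auto
  obtain Zo c0 where E0: "E PK Y Zo i' c0" using am' unfolding adm_mono_def by blast
  have c0k: "is_cokernel C PK Y Zo i' c0" using E_coker[OF E0] .
  have c0: "c0 \<in> H Y Zo" and c0i: "c0 \<cdot> i' = z PK Zo" using c0k unfolding is_cokernel_def by auto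
  have Yo: "Y \<in> Ob C" and Zoo: "Zo \<in> Ob C" using E_ob[OF E0] by auto
  obtain w where w: "w \<in> H Y PL" "w \<cdot> i' = F" "w \<cdot> f' = l"
    using po_univ[OF po PLo F l(1) ka(2)] by blast
  obtain P p' h' where pb: "is_pullback C A PM PL P q G p' h'" and ae': "adm_epi E P PL p'"
    using PB[OF aq G] by blast
  have p': "p' \<in> H P PL" and h': "h' \<in> H P A" and sqpb: "q \<cdot> h' = G \<cdot> p'"
    using pb unfolding is_pullback_def by auto
  obtain N' k' where Ek: "E N' P PL k' p'" using ae' unfolding adm_epi_def by blast
  have kk: "is_kernel C N' P PL k' p'" using E_ker[OF Ek] .
  have ck: "is_cokernel C N' P PL k' p'" using E_coker[OF Ek] .
  have k': "k' \<in> H N' P" and pk': "p' \<cdot> k' = z N' PL" using kk unfolding is_kernel_def by auto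
  have N'o: "N' \<in> Ob C" and Po: "P \<in> Ob C" using E_ob[OF Ek] by auto
  define lh where "lh = l \<cdot> h'"
  have lh: "lh \<in> H P PL" unfolding lh_def using cmp_hom[OF h' l(1)] .
  obtain nl where nl: "nl \<in> H P PL" "lh \<oplus> nl = z P PL" using add_inv[OF lh] by blast
  define t where "t = p' \<oplus> nl"
  have t: "t \<in> H P PL" unfolding t_def using add_hom[OF p' nl(1)] .
  have Glh: "G \<cdot> lh = G \<cdot> p'" unfolding lh_def using assoc[OF h' l(1) G] Gl sqpb by simp
  have "G \<cdot> t = G \<cdot> p' \<oplus> G \<cdot> nl" unfolding t_def using distl[OF p' nl(1) G] .
  also have "\<dots> = G \<cdot> (lh \<oplus> nl)" using distl[OF lh nl(1) G] Glh by simp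
  also have "\<dots> = z P PM" using nl(2) cmp_z[OF G Po] by simp
  finally have Gt: "G \<cdot> t = z P PM" .
  obtain \<rho> where r: "\<rho> \<in> H P PK" "F \<cdot> \<rho> = t" using Ffac[OF Po t Gt] by blast
  have tlh: "t \<oplus> lh = p'" unfolding t_def
    using add_assoc[OF p' nl(1) lh] add_comm[OF nl(1) lh] nl(2) add_z[OF p'] by simp
  have hk: "h' \<cdot> k' \<in> H N' A" using cmp_hom[OF k' h'] .
  have "q \<cdot> (h' \<cdot> k') = G \<cdot> (p' \<cdot> k')" using assoc[OF k' h' q] assoc[OF k' p' G] sqpb by simp
  also have "\<dots> = z N' PM" using pk' cmp_z[OF G N'o] by simp
  finally have "q \<cdot> (h' \<cdot> k') = z N' PM" .
  then obtain \<sigma> where sg: "\<sigma> \<in> H N' N" "n \<cdot> \<sigma> = h' \<cdot> k'" using ker_fac[OF kn N'o hk] by blast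
  have rk: "\<rho> \<cdot> k' \<in> H N' PK" using cmp_hom[OF k' r(1)] .
  have ks: "\<kappa> \<cdot> \<sigma> \<in> H N' PK" using cmp_hom[OF sg(1) ka(1)] .
  have rks: "\<rho> \<cdot> k' \<oplus> \<kappa> \<cdot> \<sigma> \<in> H N' PK" using add_hom[OF rk ks] .
  have "F \<cdot> (\<rho> \<cdot> k' \<oplus> \<kappa> \<cdot> \<sigma>) = F \<cdot> (\<rho> \<cdot> k') \<oplus> F \<cdot> (\<kappa> \<cdot> \<sigma>)" using distl[OF rk ks F] .
  also have "\<dots> = t \<cdot> k' \<oplus> lh \<cdot> k'"
  proof -
    have "F \<cdot> (\<rho> \<cdot> k') = t \<cdot> k'" using assoc[OF k' r(1) F] r(2) by simp
    moreover have "F \<cdot> (\<kappa> \<cdot> \<sigma>) = lh \<cdot> k'"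
      using assoc[OF sg(1) ka(1) F] ka(2) assoc[OF sg(1) n l(1)] sg(2) assoc[OF k' h' l(1)] unfolding lh_def by simp
    ultimately show ?thesis by simp
  qed
  also have "\<dots> = (t \<oplus> lh) \<cdot> k'" using distr[OF t lh k'] by simp
  also have "\<dots> = F \<cdot> z N' PK" using tlh pk' cmp_z[OF F N'o] by simp
  finally have "\<rho> \<cdot> k' \<oplus> \<kappa> \<cdot> \<sigma> = z N' PK" using Fmono[OF N'o rks z_hom[OF N'o PKo]] by blast
  then have e12: "\<kappa> \<cdot> \<sigma> \<oplus> \<rho> \<cdot> k' = z N' PK" using add_comm[OF rk ks] by simp
  define \<phi> where "\<phi> = f' \<cdot> h' \<oplus> i' \<cdot> \<rho>"
  have fh': "f' \<cdot> h' \<in> H P Y" using cmp_hom[OF h' f'] .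
  have ir: "i' \<cdot> \<rho> \<in> H P Y" using cmp_hom[OF r(1) i'] .
  have ph: "\<phi> \<in> H P Y" unfolding \<phi>_def using add_hom[OF fh' ir] .
  have "\<phi> \<cdot> k' = (f' \<cdot> h') \<cdot> k' \<oplus> (i' \<cdot> \<rho>) \<cdot> k'" unfolding \<phi>_def using distr[OF fh' ir k'] .
  also have "\<dots> = i' \<cdot> (\<kappa> \<cdot> \<sigma>) \<oplus> i' \<cdot> (\<rho> \<cdot> k')"
  proof -
    have "(f' \<cdot> h') \<cdot> k' = i' \<cdot> (\<kappa> \<cdot> \<sigma>)"
      using assoc[OF k' h' f'] sg(2) assoc[OF sg(1) n f'] sqpo assoc[OF sg(1) ka(1) i'] by simp
    moreover have "(i' \<cdot> \<rho>) \<cdot> k' = i' \<cdot> (\<rho> \<cdot> k')" using assoc[OF k' r(1) i'] by simp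
    ultimately show ?thesis by simp
  qed
  also have "\<dots> = i' \<cdot> (\<kappa> \<cdot> \<sigma> \<oplus> \<rho> \<cdot> k')" using distl[OF ks rk i'] by simp
  also have "\<dots> = z N' Y" using e12 cmp_z[OF i' N'o] by simp
  finally have phk: "\<phi> \<cdot> k' = z N' Y" .
  obtain v where v: "v \<in> H PL Y" "v \<cdot> p' = \<phi>" using coker_fac[OF ck Yo ph phk] by blast
  have wv: "w \<cdot> v \<in> H PL PL" using cmp_hom[OF v(1) w(1)] .
  have "(w \<cdot> v) \<cdot> p' = w \<cdot> \<phi>" using assoc[OF p' v(1) w(1)] v(2) by simp
  also have "\<dots> = w \<cdot> (f' \<cdot> h') \<oplus> w \<cdot> (i' \<cdot> \<rho>)" unfolding \<phi>_def using distl[OF fh' ir w(1)] .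
  also have "\<dots> = lh \<oplus> t" using assoc[OF h' f' w(1)] assoc[OF r(1) i' w(1)] w r(2) unfolding lh_def by simp
  also have "\<dots> = ii PL \<cdot> p'" using add_comm[OF lh t] tlh id_l[OF p'] by simp
  finally have wv_id: "w \<cdot> v = ii PL" using coker_epi[OF ck PLo wv id_hom[OF PLo]] by blast
  have zPKA: "z PK A \<in> H PK A" using z_hom[OF PKo A] .
  have "G \<cdot> F = q \<cdot> z PK A" using GF cmp_z[OF q PKo] by simp
  then obtain s0 where s0: "s0 \<in> H PK P" "p' \<cdot> s0 = F" "h' \<cdot> s0 = z PK A"
    using pb_univ[OF pb PKo F zPKA] by blast
  have lhs0: "lh \<cdot> s0 = z PK PL" unfolding lh_def using assoc[OF s0(1) h' l(1)] s0(3) cmp_z[OF l(1) PKo] by simp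
  have "lh \<cdot> s0 \<oplus> nl \<cdot> s0 = z PK PL" using distr[OF lh nl(1) s0(1)] nl(2) z_cmp[OF s0(1) PLo] by simp
  then have nls0: "nl \<cdot> s0 = z PK PL" using lhs0 z_add[OF cmp_hom[OF s0(1) nl(1)]] by simp
  have "F \<cdot> (\<rho> \<cdot> s0) = t \<cdot> s0" using assoc[OF s0(1) r(1) F] r(2) by simp
  also have "\<dots> = F \<cdot> ii PK" unfolding t_def using distr[OF p' nl(1) s0(1)] s0(2) nls0 add_z[OF F] id_r[OF F] by simp
  finally have rs0: "\<rho> \<cdot> s0 = ii PK" using Fmono[OF PKo cmp_hom[OF s0(1) r(1)] id_hom[OF PKo]] by blast
  have "v \<cdot> F = \<phi> \<cdot> s0" using assoc[OF s0(1) p' v(1)] s0(2) v(2) by simp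
  also have "\<dots> = (f' \<cdot> h') \<cdot> s0 \<oplus> (i' \<cdot> \<rho>) \<cdot> s0" unfolding \<phi>_def using distr[OF fh' ir s0(1)] .
  also have "\<dots> = z PK Y \<oplus> i'" using assoc[OF s0(1) h' f'] assoc[OF s0(1) r(1) i'] s0(3) rs0 cmp_z[OF f' PKo] id_r[OF i'] by simp
  also have "\<dots> = i'" using z_add[OF i'] .
  finally have vF: "v \<cdot> F = i'" .
  have "G \<cdot> l = q \<cdot> ii A" using Gl id_r[OF q] by simp
  then obtain t0 where t0: "t0 \<in> H A P" "p' \<cdot> t0 = l" "h' \<cdot> t0 = ii A"
    using pb_univ[OF pb A l(1) id_hom[OF A]] by blast
  have lht0: "lh \<cdot> t0 = l" unfolding lh_def using assoc[OF t0(1) h' l(1)] t0(3) id_r[OF l(1)] by simp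
  have "lh \<cdot> t0 \<oplus> nl \<cdot> t0 = z A PL" using distr[OF lh nl(1) t0(1)] nl(2) z_cmp[OF t0(1) PLo] by simp
  then have lnl: "l \<oplus> nl \<cdot> t0 = z A PL" using lht0 by simp
  have "F \<cdot> (\<rho> \<cdot> t0) = t \<cdot> t0" using assoc[OF t0(1) r(1) F] r(2) by simp
  also have "\<dots> = F \<cdot> z A PK" unfolding t_def using distr[OF p' nl(1) t0(1)] t0(2) lnl cmp_z[OF F A] by simp
  finally have rt0: "\<rho> \<cdot> t0 = z A PK" using Fmono[OF A cmp_hom[OF t0(1) r(1)] z_hom[OF A PKo]] by blast
  have "v \<cdot> l = \<phi> \<cdot> t0" using assoc[OF t0(1) p' v(1)] t0(2) v(2) by simp
  also have "\<dots> = (f' \<cdot> h') \<cdot> t0 \<oplus> (i' \<cdot> \<rho>) \<cdot> t0" unfolding \<phi>_def using distr[OF fh' ir t0(1)] .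
  also have "\<dots> = f' \<oplus> z A Y" using assoc[OF t0(1) h' f'] assoc[OF t0(1) r(1) i'] t0(3) rt0 cmp_z[OF i' A] id_r[OF f'] by simp
  also have "\<dots> = f'" using add_z[OF f'] .
  finally have vl: "v \<cdot> l = f'" .
  have vw: "v \<cdot> w \<in> H Y Y" using cmp_hom[OF w(1) v(1)] .
  have "\<exists>!x. x \<in> H Y Y \<and> x \<cdot> i' = i' \<and> x \<cdot> f' = f'" using po_univ[OF po Yo i' f' sqpo] .
  moreover have "(v \<cdot> w) \<cdot> i' = i'" using assoc[OF i' w(1) v(1)] w(2) vF by simp
  moreover have "(v \<cdot> w) \<cdot> f' = f'" using assoc[OF f' w(1) v(1)] w(3) vl by simp
  ultimately have vw_id: "v \<cdot> w = ii Y" using vw id_hom[OF Yo] id_l[OF i'] id_l[OF f'] by blast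
  have c0f: "c0 \<cdot> f' \<in> H A Zo" using cmp_hom[OF f' c0] .
  have c0fn: "(c0 \<cdot> f') \<cdot> n = z N Zo" using assoc[OF n f' c0] sqpo[symmetric] assoc[OF ka(1) i' c0] c0i z_cmp[OF ka(1) Zoo] by simp
  obtain d where d: "d \<in> H PM Zo" "d \<cdot> q = c0 \<cdot> f'" using coker_fac[OF cn Zoo c0f c0fn] by blast
  have Gw: "G \<cdot> w \<in> H Y PM" using cmp_hom[OF w(1) G] .
  have "(G \<cdot> w) \<cdot> i' = z PK PM" using assoc[OF i' w(1) G] w(2) GF by simp
  then obtain e where e: "e \<in> H Zo PM" "e \<cdot> c0 = G \<cdot> w" using coker_fac[OF c0k PMo Gw] by blast
  have ed: "e \<cdot> d \<in> H PM PM" using cmp_hom[OF d(1) e(1)] .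
  have "(e \<cdot> d) \<cdot> q = ii PM \<cdot> q"
    using assoc[OF q d(1) e(1)] d(2) assoc[OF f' c0 e(1)] e(2) assoc[OF f' w(1) G] w(3) Gl id_l[OF q] by simp
  then have ed_id: "e \<cdot> d = ii PM" using coker_epi[OF cn PMo ed id_hom[OF PMo]] by blast
  have dG: "d \<cdot> G \<in> H PL Zo" using cmp_hom[OF G d(1)] .
  have dGw: "(d \<cdot> G) \<cdot> w \<in> H Y Zo" using cmp_hom[OF w(1) dG] .
  have zPKZ: "z PK Zo \<in> H PK Zo" using z_hom[OF PKo Zoo] .
  have "z PK Zo \<cdot> \<kappa> = (c0 \<cdot> f') \<cdot> n" using c0fn z_cmp[OF ka(1) Zoo] by simp
  then have "\<exists>!x. x \<in> H Y Zo \<and> x \<cdot> i' = z PK Zo \<and> x \<cdot> f' = c0 \<cdot> f'" using po_univ[OF po Zoo zPKZ c0f] by blast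
  moreover have "((d \<cdot> G) \<cdot> w) \<cdot> i' = z PK Zo"
    using assoc[OF i' w(1) dG] w(2) assoc[OF F G d(1)] GF cmp_z[OF d(1) PKo] by simp
  moreover have "((d \<cdot> G) \<cdot> w) \<cdot> f' = c0 \<cdot> f'"
    using assoc[OF f' w(1) dG] w(3) assoc[OF l(1) G d(1)] Gl d(2) by simp
  ultimately have dGw_eq: "(d \<cdot> G) \<cdot> w = c0" using dGw c0 c0i by blast
  have de: "d \<cdot> e \<in> H Zo Zo" using cmp_hom[OF e(1) d(1)] .
  have "(d \<cdot> e) \<cdot> c0 = ii Zo \<cdot> c0" using assoc[OF c0 e(1) d(1)] e(2) assoc[OF w(1) G d(1)] dGw_eq id_l[OF c0] by simp
  then have de_id: "d \<cdot> e = ii Zo" using coker_epi[OF c0k Zoo de id_hom[OF Zoo]] by blast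
  have dGv: "d \<cdot> G = c0 \<cdot> v"
  proof -
    have "d \<cdot> G = (d \<cdot> G) \<cdot> (w \<cdot> v)" using wv_id id_r[OF dG] by simp
    also have "\<dots> = c0 \<cdot> v" using assoc[OF v(1) w(1) dG] dGw_eq by simp
    finally show ?thesis .
  qed
  have isov: "is_iso C PL Y v" unfolding is_iso_def using v(1) w(1) wv_id vw_id by blast
  have isod: "is_iso C PM Zo d" unfolding is_iso_def using d(1) e(1) ed_id de_id by blast
  show ?thesis
    by (rule E_iso[OF E0 iso_id[OF PKo] isov isod F G]) (use vF id_r[OF i'] dGv in auto)
qed

end

theorem lemma8p3:
  fixes C :: "('o, 'm, 'x) acat_scheme" and E :: "('o, 'm) confl"
    and I :: "'i set" and K L M :: "'i \<Rightarrow> 'o" and f g :: "'i \<Rightarrow> 'm"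
  assumes "exact_category C E"
    and "\<forall>i\<in>I. E (K i) (L i) (M i) (f i) (g i)"
    and "is_product C I K PK pK" and "is_product C I L PL pL" and "is_product C I M PM pM"
    and "A \<in> Ob C" and "q \<in> Hom C A PM" and "adm_epi E A PM q"
    and "\<forall>i\<in>I. Ext1_zero C E A (K i)"
    and "F \<in> Hom C PK PL" and "\<forall>i\<in>I. cmp C (pL i) F = cmp C (f i) (pK i)"
    and "G \<in> Hom C PL PM" and "\<forall>i\<in>I. cmp C (pM i) G = cmp C (g i) (pL i)"
  shows "E PK PL PM F G"
proof -
  interpret excat C E by unfold_locales (rule assms(1))
  show ?thesis using main assms(2-13) by blast
qed

end
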